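(* Let $\Omega=\{z\in\mathbb{C}:|z|=1\}$. For $|\psi|<1$ let $BC_+(\psi)$ and $BC_-(\psi)$ be the distributions on $\Omega\times\Omega$ with densities $\frac{1}{4\pi^2}\frac{1-|\psi|^2}{|1-\psi z_v\overline{z_u}|^2}$ and $\frac{1}{4\pi^2}\frac{1-|\psi|^2}{|1-\psi z_v z_u|^2}$ respectively. Then: (i) if $(Z_{U1},Z_{V1})\sim BC_+(\psi_1)$ and $(Z_{U2},Z_{V2})\sim BC_+(\psi_2)$ are independent, then $(Z_{U1}Z_{U2},Z_{V1}Z_{V2})\sim BC_+(\psi_1\psi_2)$, and the same holds with $BC_+$ replaced by $BC_-$ throughout; (ii) if $(Z_{U1},Z_{V1})\sim BC_+(\psi_1)$ and $(Z_{U2},Z_{V2})\sim BC_-(\psi_2)$ are independent, then $(Z_{U1}Z_{U2},Z_{V1}Z_{V2})\sim BC_+(0)$; (iii) if $(Z_U,Z_V)\sim BC_\pm(\psi)$, then $(Z_U^n,Z_V^n)\sim BC_\pm(\psi^n)$ for every $n\in\mathbb{N}$ (with the same sign).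
   Context: Densities are with respect to arc-length measure on each circle. $BC_+(0)$ is the uniform distribution on the torus $\Omega\times\Omega$. *)

theory Defs
  imports "HOL-Probability.Probability"
begin

definition arc_measure :: "complex measure" where
  "arc_measure = distr (restrict_space lborel {0..<2*pi}) borel cis"

definition torus_measure :: "(complex \<times> complex) measure" where
  "torus_measure = arc_measure \<Otimes>\<^sub>M arc_measure"

definition BC_plus :: "complex \<Rightarrow> (complex \<times> complex) measure" where
  "BC_plus \<psi> = density torus_measure
     (\<lambda>(zu, zv). ennreal (1 / (4 * pi^2) * (1 - (cmod \<psi>)^2)
                            / (cmod (1 - \<psi> * zv * cnj zu))^2))"

definition BC_minus :: "complex \<Rightarrow> (complex \<times> complex) measure" where
  "BC_minus \<psi> = density torus_measure
     (\<lambda>(zu, zv). ennreal (1 / (4 * pi^2) * (1 - (cmod \<psi>)^2)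
                            / (cmod (1 - \<psi> * zv * zu))^2))"

definition has_law :: "'a measure \<Rightarrow> ('a \<Rightarrow> 'b) \<Rightarrow> 'b measure \<Rightarrow> bool" where
  "has_law M X N \<longleftrightarrow> X \<in> measurable M N \<and> distr M N X = N"

end

theory Submission
  imports Defs
begin


abbreviation "Rm \<equiv> restrict_space lborel {0..<2*pi}"

lemma Rm_integral:
  fixes h :: "real \<Rightarrow> complex"
  assumes "continuous_on UNIV h"
  shows "integral\<^sup>L Rm h = (LBINT x=ereal 0..ereal (2*pi). h x)"
proof -
  have hm[measurable]: "h \<in> borel_measurable borel"
    using assms by (rule borel_measurable_continuous_onI)
  have "integral\<^sup>L Rm h = (\<integral>x. indicator {0..<2*pi} x *\<^sub>R h x \<partial>lborel)"
    by (rule integral_restrict_space) auto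
  also have "\<dots> = (\<integral>x. indicator {0<..<2*pi} x *\<^sub>R h x \<partial>lborel)"
  proof (rule integral_cong_AE)
    show "AE x in lborel. indicat_real {0..<2 * pi} x *\<^sub>R h x = indicat_real {0<..<2 * pi} x *\<^sub>R h x"
      using AE_lborel_singleton[of 0] by eventually_elim (auto simp: indicator_def)
  qed (measurable, measurable)
  also have "\<dots> = (LBINT x=ereal 0..ereal (2*pi). h x)"
    by (auto simp: interval_lebesgue_integral_def set_lebesgue_integral_def einterval_def intro!: Bochner_Integration.integral_cong split: split_indicator)
  finally show ?thesis .
qed

lemma cis_int_integral:
  fixes m :: int
  shows "integral\<^sup>L Rm (\<lambda>t. cis (of_int m * t)) = (if m = 0 then 2*pi else 0)"
proof -
  have "integral\<^sup>L Rm (\<lambda>t. cis (of_int m * t)) = (LBINT x=ereal 0..ereal (2*pi). cis (of_int m * x))"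
    by (rule Rm_integral) (auto intro!: continuous_intros)
  also have "\<dots> = (if m = 0 then 2*pi else 0)"
  proof (cases "m = 0")
    case True
    have "(LBINT x=ereal 0..ereal (2*pi). (1::complex)) = of_real (2*pi) - of_real 0"
      by (rule interval_integral_FTC_finite) (auto intro!: derivative_eq_intros)
    then show ?thesis using True by (simp add: zero_ereal_def)
  next
    case False
    let ?F = "\<lambda>t. cis (of_int m * t) / (\<i> * of_int m)"
    have "(LBINT x=ereal 0..ereal (2*pi). cis (of_int m * x)) = ?F (2*pi) - ?F 0"
    proof (rule interval_integral_FTC_finite)
      show "continuous_on {min 0 (2 * pi)..max 0 (2 * pi)} (\<lambda>x. cis (real_of_int m * x))"
        by (auto intro!: continuous_intros)
      fix x :: real
      show "(?F has_vector_derivative cis (of_int m * x)) (at x within {min 0 (2 * pi)..max 0 (2 * pi)})"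
        unfolding has_vector_derivative_def
        using False by (auto intro!: derivative_eq_intros ext simp: field_simps scaleR_conv_of_real)
    qed
    also have "\<dots> = 0"
    proof -
      have "cis (of_int m * (2*pi)) = 1"
        using cis_multiple_2pi[of "of_int m"] by (simp add: mult.commute)
      then show ?thesis by simp
    qed
    finally show ?thesis using False by simp
  qed
  finally show ?thesis .
qed

lemma Rm_space[simp]: "space Rm = {0..<2*pi}" by simp

lemma Rm_measure: "measure Rm {0..<2*pi} = 2*pi"
  by (subst measure_restrict_space) auto

lemma Rm_finite: "finite_measure Rm"
  by (rule finite_measureI) (simp add: emeasure_restrict_space)

lemma Rm_integrable:
  fixes h :: "real \<Rightarrow> 'b::{banach, second_countable_topology}"
  assumes "continuous_on UNIV h"
  shows "integrable Rm h"
proof -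
  have "set_integrable lborel {0..2*pi} h"
    by (rule borel_integrable_atLeastAtMost') (use assms continuous_on_subset in blast)
  then have "set_integrable lborel {0..<2*pi} h"
    by (rule set_integrable_subset) auto
  then show ?thesis
    by (subst integrable_restrict_space) (auto simp: set_integrable_def)
qed

lemma Rm_integral_const: "integral\<^sup>L Rm (\<lambda>t. c) = (2*pi) *\<^sub>R (c::'a::{banach, second_countable_topology})"
  using Rm_measure by simp

lemma cis_int_integral':
  fixes m :: int and c :: complex
  shows "integral\<^sup>L Rm (\<lambda>t. c * cis (of_int m * t)) = c * (if m = 0 then 2*pi else 0)"
  by (simp add: cis_int_integral)

definition Gk :: "complex \<Rightarrow> int \<Rightarrow> complex" where
  "Gk \<psi> k = (if k \<le> 0 then \<psi> ^ nat (-k) else cnj \<psi> ^ nat k)"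

lemma poisson_series:
  fixes w :: complex
  assumes "cmod w < 1"
  shows "complex_of_real ((1 - (cmod w)^2) / (cmod (1 - w))^2) = (\<Sum>n. w^n) + (\<Sum>n. cnj w ^ n) - 1"
proof -
  have S1: "(\<Sum>n. w^n) = 1 / (1 - w)" using geometric_sums[OF assms] by (simp add: sums_iff)
  have S2: "(\<Sum>n. cnj w^n) = 1 / (1 - cnj w)" using geometric_sums[of "cnj w"] assms by (simp add: sums_iff)
  have n1: "1 - w \<noteq> 0" using assms by auto
  have N1: "complex_of_real ((cmod (1 - w))^2) = (1 - w) * (1 - cnj w)"
    by (subst complex_norm_square) simp
  have N2: "complex_of_real ((cmod w)^2) = w * cnj w" by (subst complex_norm_square) simp
  have n2: "1 - cnj w \<noteq> 0" using assms
    by (metis complex_cnj_one complex_mod_cnj norm_one order_less_irrefl right_minus_eq)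
  have "complex_of_real ((1 - (cmod w)^2) / (cmod (1 - w))^2) = (1 - w * cnj w) / ((1-w)*(1-cnj w))"
    by (simp only: of_real_divide of_real_diff of_real_1 N1 N2)
  also have "\<dots> = 1 / (1 - w) + 1 / (1 - cnj w) - 1"
    using n1 n2 by (simp add: divide_simps) (simp add: algebra_simps)
  finally show ?thesis by (simp only: S1 S2)
qed


lemma sum_single_int:
  fixes g :: "nat \<Rightarrow> complex"
  assumes "\<And>n. int n \<noteq> m \<Longrightarrow> g n = 0"
  shows "g sums (if m \<ge> 0 then g (nat m) else 0)"
proof -
  have "g = (\<lambda>n. if n = nat m then (if m \<ge> 0 then g n else 0) else 0)"
    using assms by (auto intro!: ext)
  moreover have "(\<lambda>n. if n = nat m then (if m \<ge> 0 then g n else 0) else 0) sums (if m \<ge> 0 then g (nat m) else 0)"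
    by (rule sums_single[of _ "\<lambda>n. if m \<ge> 0 then g n else 0", simplified])
  ultimately show ?thesis by simp
qed

lemma poisson_inner:
  assumes psi: "cmod \<psi> < 1"
  shows "integral\<^sup>L Rm (\<lambda>t. cis (of_int k * t) * complex_of_real ((1 - (cmod \<psi>)^2) / (cmod (1 - \<psi> * cis (t + x)))^2))
         = 2*pi * Gk \<psi> k * cis (- of_int k * x)"
proof -
  define w where "w t = \<psi> * cis (t + x)" for t
  have nw: "cmod (w t) = cmod \<psi>" for t by (simp add: w_def norm_mult)
  define f1 where "f1 n t = \<psi>^n * cis (real n * x) * cis (of_int (k + int n) * t)" for n t
  define f2 where "f2 n t = cnj \<psi>^n * cis (- (real n * x)) * cis (of_int (k - int n) * t)" for n t
  have e1: "cis (of_int k * t) * w t ^ n = f1 n t" for n t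
  proof -
    have "cis (of_int k * t) * w t ^ n = \<psi>^n * (cis (of_int k * t) * cis (real n * (t + x)))"
      by (simp only: w_def power_mult_distrib Complex.DeMoivre ac_simps)
    also have "cis (of_int k * t) * cis (real n * (t + x)) = cis (real n * x) * cis (of_int (k + int n) * t)"
      unfolding cis_mult by (rule arg_cong[where f=cis]) (simp add: algebra_simps)
    finally show ?thesis by (simp add: f1_def)
  qed
  have e2: "cis (of_int k * t) * cnj (w t) ^ n = f2 n t" for n t
  proof -
    have "cis (of_int k * t) * cnj (w t) ^ n = cnj \<psi>^n * (cis (of_int k * t) * cis (real n * (- (t + x))))"
      by (simp only: w_def complex_cnj_mult cis_cnj power_mult_distrib Complex.DeMoivre ac_simps)
    also have "cis (of_int k * t) * cis (real n * (- (t + x))) = cis (- (real n * x)) * cis (of_int (k - int n) * t)"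
      unfolding cis_mult by (rule arg_cong[where f=cis]) (simp add: algebra_simps)
    finally show ?thesis by (simp add: f2_def)
  qed
  have sw1: "summable (\<lambda>n. w t ^ n)" for t using psi nw by (intro summable_geometric) simp
  have sw2: "summable (\<lambda>n. cnj (w t) ^ n)" for t using psi nw by (intro summable_geometric) simp
  have integrand: "cis (of_int k * t) * complex_of_real ((1 - (cmod \<psi>)^2) / (cmod (1 - \<psi> * cis (t + x)))^2)
      = (\<Sum>n. f1 n t) + (\<Sum>n. f2 n t) - cis (of_int k * t)" for t
  proof -
    have P: "complex_of_real ((1 - (cmod \<psi>)^2) / (cmod (1 - \<psi> * cis (t + x)))^2)
       = (\<Sum>n. w t^n) + (\<Sum>n. cnj (w t) ^ n) - 1"
      using poisson_series[of "w t"] psi nw[of t] by (simp add: w_def)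
    have s1: "(\<Sum>n. f1 n t) = cis (of_int k * t) * (\<Sum>n. w t ^ n)"
      using suminf_mult[OF sw1[of t], of "cis (of_int k * t)"] by (simp add: e1[symmetric])
    have s2: "(\<Sum>n. f2 n t) = cis (of_int k * t) * (\<Sum>n. cnj (w t) ^ n)"
      using suminf_mult[OF sw2[of t], of "cis (of_int k * t)"] by (simp add: e2[symmetric])
    show ?thesis unfolding P s1 s2 by (simp only: ring_distribs mult_1_right)
  qed
  have cont1: "continuous_on UNIV (f1 n)" for n unfolding f1_def by (intro continuous_intros)
  have cont2: "continuous_on UNIV (f2 n)" for n unfolding f2_def by (intro continuous_intros)
  have nf1: "norm (f1 n t) = cmod \<psi> ^ n" for n t by (simp add: f1_def norm_mult norm_power)
  have nf2: "norm (f2 n t) = cmod \<psi> ^ n" for n t by (simp add: f2_def norm_mult norm_power)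
  have sumn: "summable (\<lambda>n. cmod \<psi> ^ n)" using psi by (intro summable_geometric) simp
  have sumi: "summable (\<lambda>n. 2 * pi * cmod \<psi> ^ n)" using sumn by (rule summable_mult)
  have if1: "integrable Rm (f1 n)" for n using cont1 by (rule Rm_integrable)
  have ae1: "AE t in Rm. summable (\<lambda>n. norm (f1 n t))" using psi by (simp add: nf1 sumn)
  have si1: "summable (\<lambda>n. \<integral>t. norm (f1 n t) \<partial>Rm)" using sumi by (simp add: nf1 Rm_integral_const)
  note I1 = sums_integral[OF if1 ae1 si1]
  note int1 = integrable_suminf[OF if1 ae1 si1]
  have if2: "integrable Rm (f2 n)" for n using cont2 by (rule Rm_integrable)
  have ae2: "AE t in Rm. summable (\<lambda>n. norm (f2 n t))" using psi by (simp add: nf2 sumn)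
  have si2: "summable (\<lambda>n. \<integral>t. norm (f2 n t) \<partial>Rm)" using sumi by (simp add: nf2 Rm_integral_const)
  note I2 = sums_integral[OF if2 ae2 si2]
  note int2 = integrable_suminf[OF if2 ae2 si2]
  have v1: "integral\<^sup>L Rm (f1 n) = \<psi>^n * cis (real n * x) * (if k + int n = 0 then 2*pi else 0)" for n
    unfolding f1_def by (rule cis_int_integral')
  have v2: "integral\<^sup>L Rm (f2 n) = cnj \<psi>^n * cis (- (real n * x)) * (if k - int n = 0 then 2*pi else 0)" for n
    unfolding f2_def by (rule cis_int_integral')
  have J1: "(\<lambda>n. integral\<^sup>L Rm (f1 n)) sums (if -k \<ge> 0 then \<psi>^nat (-k) * cis (real (nat (-k)) * x) * 2*pi else 0)"
  proof -
    have "(\<lambda>n. integral\<^sup>L Rm (f1 n)) sums (if -k \<ge> 0 then integral\<^sup>L Rm (f1 (nat (-k))) else 0)"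
      by (rule sum_single_int) (simp add: v1)
    moreover have "-k \<ge> 0 \<Longrightarrow> integral\<^sup>L Rm (f1 (nat (-k))) = \<psi>^nat (-k) * cis (real (nat (-k)) * x) * 2*pi"
      by (simp only: v1) simp
    ultimately show ?thesis by (cases "-k \<ge> 0") auto
  qed
  have J2: "(\<lambda>n. integral\<^sup>L Rm (f2 n)) sums (if k \<ge> 0 then cnj \<psi>^nat k * cis (- (real (nat k) * x)) * 2*pi else 0)"
  proof -
    have "(\<lambda>n. integral\<^sup>L Rm (f2 n)) sums (if k \<ge> 0 then integral\<^sup>L Rm (f2 (nat k)) else 0)"
      by (rule sum_single_int) (simp add: v2)
    moreover have "k \<ge> 0 \<Longrightarrow> integral\<^sup>L Rm (f2 (nat k)) = cnj \<psi>^nat k * cis (- (real (nat k) * x)) * 2*pi"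
      by (simp only: v2) simp
    ultimately show ?thesis by (cases "k \<ge> 0") auto
  qed
  have int3: "integrable Rm (\<lambda>t. cis (of_int k * t))" by (rule Rm_integrable) (intro continuous_intros)
  have "integral\<^sup>L Rm (\<lambda>t. cis (of_int k * t) * complex_of_real ((1 - (cmod \<psi>)^2) / (cmod (1 - \<psi> * cis (t + x)))^2))
      = integral\<^sup>L Rm (\<lambda>t. (\<Sum>n. f1 n t) + (\<Sum>n. f2 n t) - cis (of_int k * t))"
    by (simp only: integrand)
  also have "\<dots> = integral\<^sup>L Rm (\<lambda>t. \<Sum>n. f1 n t) + integral\<^sup>L Rm (\<lambda>t. \<Sum>n. f2 n t) - integral\<^sup>L Rm (\<lambda>t. cis (of_int k * t))"
    using int1 int2 int3 by simp
  also have "\<dots> = (if -k \<ge> 0 then \<psi>^nat (-k) * cis (real (nat (-k)) * x) * 2*pi else 0)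
      + (if k \<ge> 0 then cnj \<psi>^nat k * cis (- (real (nat k) * x)) * 2*pi else 0) - (if k = 0 then 2*pi else 0)"
    using sums_unique2[OF I1 J1] sums_unique2[OF I2 J2] cis_int_integral[of k] by simp
  also have "\<dots> = 2*pi * Gk \<psi> k * cis (- of_int k * x)"
    by (auto simp: Gk_def)
  finally show ?thesis .
qed


lemma cis_measurable[measurable]: "cis \<in> borel_measurable borel"
  by (intro borel_measurable_continuous_onI continuous_intros)

lemma Rm_id_measurable[measurable]: "(\<lambda>s::real. s) \<in> borel_measurable Rm"
  by (rule measurable_restrict_space1) simp

lemma Rm_pair: "pair_sigma_finite Rm Rm"
proof -
  interpret finite_measure Rm by (rule Rm_finite)
  show ?thesis by (simp add: pair_sigma_finite_def sigma_finite_measure_axioms)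
qed

lemma RR_finite: "finite_measure (Rm \<Otimes>\<^sub>M Rm)"
  by (rule finite_measure_pair_measure[OF Rm_finite Rm_finite])

lemma norm_1_minus_ge:
  fixes \<psi> :: complex
  assumes "cmod \<psi> < 1"
  shows "cmod (1 - \<psi> * cis a) \<ge> 1 - cmod \<psi>"
proof -
  have "1 - cmod (\<psi> * cis a) \<le> cmod (1 - \<psi> * cis a)"
    using norm_triangle_ineq2[of 1 "\<psi> * cis a"] by simp
  then show ?thesis by (simp add: norm_mult)
qed

lemma poisson_bound:
  fixes \<psi> :: complex
  assumes "cmod \<psi> < 1"
  shows "(1 - (cmod \<psi>)^2) / (cmod (1 - \<psi> * cis a))^2 \<le> (1 - (cmod \<psi>)^2) / (1 - cmod \<psi>)^2"
proof (rule divide_left_mono)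
  have "0 \<le> cmod \<psi>" by simp
  then show "0 \<le> 1 - (cmod \<psi>)^2" using assms by (simp add: abs_square_le_1)
  show "(1 - cmod \<psi>)^2 \<le> (cmod (1 - \<psi> * cis a))^2"
    using norm_1_minus_ge[OF assms, of a] assms by (intro power_mono) auto
  show "0 < (cmod (1 - \<psi> * cis a))^2 * (1 - cmod \<psi>)^2"
    using norm_1_minus_ge[OF assms, of a] assms by (intro mult_pos_pos) auto
qed

lemma test_meas:
  "(\<lambda>x. complex_of_real (1 / (4*pi^2) * (1 - (cmod \<psi>)^2) / (cmod (1 - \<psi> * cis (snd x + of_int \<sigma> * fst x)))^2)
     * (cis (of_int j * fst x) * cis (of_int k * snd x))) \<in> borel_measurable (Rm \<Otimes>\<^sub>M Rm)"
  by measurable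


definition Dk :: "complex \<Rightarrow> int \<Rightarrow> real \<Rightarrow> real \<Rightarrow> real" where
  "Dk \<psi> \<sigma> s t = 1 / (4*pi^2) * (1 - (cmod \<psi>)^2) / (cmod (1 - \<psi> * cis (t + of_int \<sigma> * s)))^2"

lemma mom_param:
  assumes psi: "cmod \<psi> < 1"
  shows "integral\<^sup>L (Rm \<Otimes>\<^sub>M Rm) (\<lambda>x. complex_of_real (Dk \<psi> \<sigma> (fst x) (snd x))
            * (cis (of_int j * fst x) * cis (of_int k * snd x)))
       = (if j = \<sigma> * k then Gk \<psi> k else 0)"
proof -
  interpret P: pair_sigma_finite Rm Rm by (rule Rm_pair)
  interpret F: finite_measure "Rm \<Otimes>\<^sub>M Rm" by (rule RR_finite)
  let ?B = "1 / (4*pi^2) * ((1 - (cmod \<psi>)^2) / (1 - cmod \<psi>)^2)"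
  have bnd: "norm (complex_of_real (Dk \<psi> \<sigma> s t) * (cis (of_int j * s) * cis (of_int k * t))) \<le> ?B" for s t
  proof -
    have "0 \<le> 1 - (cmod \<psi>)^2" using psi by (simp add: abs_square_le_1)
    then have "0 \<le> Dk \<psi> \<sigma> s t" by (simp add: Dk_def)
    moreover have "Dk \<psi> \<sigma> s t \<le> ?B"
    proof -
      have "Dk \<psi> \<sigma> s t = 1 / (4*pi^2) * ((1 - (cmod \<psi>)^2) / (cmod (1 - \<psi> * cis (t + of_int \<sigma> * s)))^2)"
        by (simp add: Dk_def)
      also have "\<dots> \<le> ?B"
        using poisson_bound[OF psi, of "t + of_int \<sigma> * s"] by (intro mult_left_mono) auto
      finally show ?thesis .
    qed
    ultimately show ?thesis by (simp add: norm_mult)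
  qed
  have int: "integrable (Rm \<Otimes>\<^sub>M Rm) (\<lambda>x. complex_of_real (Dk \<psi> \<sigma> (fst x) (snd x))
            * (cis (of_int j * fst x) * cis (of_int k * snd x)))"
    by (rule F.integrable_const_bound[where B="?B"]) (use bnd in \<open>auto simp: Dk_def\<close>)
  have inner: "(\<integral>t. complex_of_real (Dk \<psi> \<sigma> s t) * (cis (of_int j * s) * cis (of_int k * t)) \<partial>Rm)
      = (1 / (4*pi^2) * 2 * pi) * Gk \<psi> k * cis (of_int (j - \<sigma> * k) * s)" for s
  proof -
    have "(\<integral>t. complex_of_real (Dk \<psi> \<sigma> s t) * (cis (of_int j * s) * cis (of_int k * t)) \<partial>Rm)
        = (\<integral>t. (complex_of_real (1 / (4*pi^2)) * cis (of_int j * s)) * (cis (of_int k * t) *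
             complex_of_real ((1 - (cmod \<psi>)^2) / (cmod (1 - \<psi> * cis (t + of_int \<sigma> * s)))^2)) \<partial>Rm)"
      by (rule Bochner_Integration.integral_cong) (auto simp: Dk_def)
    also have "\<dots> = (complex_of_real (1 / (4*pi^2)) * cis (of_int j * s)) * (2*pi * Gk \<psi> k * cis (- of_int k * (of_int \<sigma> * s)))"
      by (subst integral_mult_right_zero) (simp only: poisson_inner[OF psi])
    also have "\<dots> = (1 / (4*pi^2) * 2 * pi) * Gk \<psi> k * (cis (of_int j * s) * cis (- of_int k * (of_int \<sigma> * s)))"
      by simp
    also have "cis (of_int j * s) * cis (- of_int k * (of_int \<sigma> * s)) = cis (of_int (j - \<sigma> * k) * s)"
      by (simp add: cis_mult algebra_simps)
    finally show ?thesis .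
  qed
  have "integral\<^sup>L (Rm \<Otimes>\<^sub>M Rm) (\<lambda>x. complex_of_real (Dk \<psi> \<sigma> (fst x) (snd x))
            * (cis (of_int j * fst x) * cis (of_int k * snd x)))
     = (\<integral>s. (\<integral>t. complex_of_real (Dk \<psi> \<sigma> s t) * (cis (of_int j * s) * cis (of_int k * t)) \<partial>Rm) \<partial>Rm)"
    using P.integral_fst'[OF int] by simp
  also have "\<dots> = (\<integral>s. (1 / (4*pi^2) * 2 * pi) * Gk \<psi> k * cis (of_int (j - \<sigma> * k) * s) \<partial>Rm)"
    by (simp only: inner)
  also have "\<dots> = (1 / (4*pi^2) * 2 * pi) * Gk \<psi> k * (if j - \<sigma> * k = 0 then 2*pi else 0)"
    by (rule cis_int_integral')
  also have "\<dots> = (if j = \<sigma> * k then Gk \<psi> k else 0)"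
    by (simp add: power2_eq_square)
  finally show ?thesis .
qed


lemma arc_finite: "finite_measure arc_measure"
  unfolding arc_measure_def using Rm_finite by (rule finite_measure.finite_measure_distr) measurable

lemma cnj_measurable[measurable]: "cnj \<in> borel_measurable borel"
  by (intro borel_measurable_continuous_onI continuous_intros)

lemma torus_sets[measurable_cong]: "sets torus_measure = sets (borel \<Otimes>\<^sub>M borel)"
  unfolding torus_measure_def arc_measure_def by (rule sets_pair_measure_cong) auto

lemma torus_distr: "torus_measure = distr (Rm \<Otimes>\<^sub>M Rm) (borel \<Otimes>\<^sub>M borel) (\<lambda>x. (cis (fst x), cis (snd x)))"
proof -
  have "torus_measure = distr Rm borel cis \<Otimes>\<^sub>M distr Rm borel cis"
    by (simp add: torus_measure_def arc_measure_def)
  also have "\<dots> = distr (Rm \<Otimes>\<^sub>M Rm) (borel \<Otimes>\<^sub>M borel) (\<lambda>(x, y). (cis x, cis y))"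
    by (rule pair_measure_distr) (use arc_finite in \<open>auto simp: arc_measure_def finite_measure_def\<close>)
  also have "(\<lambda>(x, y). (cis x, cis y)) = (\<lambda>x. (cis (fst x), cis (snd x)))" by auto
  finally show ?thesis .
qed

definition tmono :: "nat \<Rightarrow> nat \<Rightarrow> nat \<Rightarrow> nat \<Rightarrow> complex \<times> complex \<Rightarrow> complex" where
  "tmono a b c d z = fst z ^ a * cnj (fst z) ^ b * (snd z ^ c * cnj (snd z) ^ d)"

lemma mono_measurable[measurable]: "tmono a b c d \<in> borel_measurable (borel \<Otimes>\<^sub>M borel)"
  unfolding tmono_def by measurable

lemma cis_pow_cnj: "cis s ^ a * cnj (cis s) ^ b = cis (of_int (int a - int b) * s)"
  by (simp add: Complex.DeMoivre cis_cnj cis_mult algebra_simps)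

lemma mono_cis: "tmono a b c d (cis s, cis t) = cis (of_int (int a - int b) * s) * cis (of_int (int c - int d) * t)"
  by (simp add: tmono_def cis_pow_cnj)

lemma mom_generic:
  fixes h :: "complex \<times> complex \<Rightarrow> real"
  assumes psi: "cmod \<psi> < 1"
    and hm[measurable]: "h \<in> borel_measurable (borel \<Otimes>\<^sub>M borel)"
    and hpos: "\<And>z. 0 \<le> h z"
    and hcis: "\<And>s t. h (cis s, cis t) = Dk \<psi> \<sigma> s t"
  shows "integral\<^sup>L (density torus_measure (\<lambda>z. ennreal (h z))) (tmono a b c d)
       = (if int a - int b = \<sigma> * (int c - int d) then Gk \<psi> (int c - int d) else 0)"
proof -
  have "integral\<^sup>L (density torus_measure (\<lambda>z. ennreal (h z))) (tmono a b c d)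
      = integral\<^sup>L torus_measure (\<lambda>z. h z *\<^sub>R tmono a b c d z)"
    by (rule integral_density) (auto simp: hpos)
  also have "\<dots> = integral\<^sup>L (Rm \<Otimes>\<^sub>M Rm) (\<lambda>x. h (cis (fst x), cis (snd x)) *\<^sub>R tmono a b c d (cis (fst x), cis (snd x)))"
    unfolding torus_distr by (rule integral_distr) measurable
  also have "\<dots> = integral\<^sup>L (Rm \<Otimes>\<^sub>M Rm) (\<lambda>x. complex_of_real (Dk \<psi> \<sigma> (fst x) (snd x))
            * (cis (of_int (int a - int b) * fst x) * cis (of_int (int c - int d) * snd x)))"
    by (simp add: hcis mono_cis scaleR_conv_of_real)
  also have "\<dots> = (if int a - int b = \<sigma> * (int c - int d) then Gk \<psi> (int c - int d) else 0)"
    by (rule mom_param[OF psi])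
  finally show ?thesis .
qed

lemma mom_plus:
  assumes psi: "cmod \<psi> < 1"
  shows "integral\<^sup>L (BC_plus \<psi>) (tmono a b c d)
       = (if int a - int b = - (int c - int d) then Gk \<psi> (int c - int d) else 0)"
proof -
  let ?h = "\<lambda>z. 1 / (4 * pi^2) * (1 - (cmod \<psi>)^2) / (cmod (1 - \<psi> * snd z * cnj (fst z)))^2"
  have "BC_plus \<psi> = density torus_measure (\<lambda>z. ennreal (?h z))"
    unfolding BC_plus_def by (rule arg_cong[where f="density torus_measure"]) auto
  moreover have "integral\<^sup>L (density torus_measure (\<lambda>z. ennreal (?h z))) (tmono a b c d)
       = (if int a - int b = (-1) * (int c - int d) then Gk \<psi> (int c - int d) else 0)"
  proof (rule mom_generic[OF psi])
    show "?h \<in> borel_measurable (borel \<Otimes>\<^sub>M borel)" by measurable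
    show "0 \<le> ?h z" for z using psi by (simp add: abs_square_le_1)
    show "?h (cis s, cis t) = Dk \<psi> (-1) s t" for s t
      by (simp add: Dk_def cis_cnj cis_mult mult.assoc)
  qed
  ultimately show ?thesis by simp
qed

lemma mom_minus:
  assumes psi: "cmod \<psi> < 1"
  shows "integral\<^sup>L (BC_minus \<psi>) (tmono a b c d)
       = (if int a - int b = int c - int d then Gk \<psi> (int c - int d) else 0)"
proof -
  let ?h = "\<lambda>z. 1 / (4 * pi^2) * (1 - (cmod \<psi>)^2) / (cmod (1 - \<psi> * snd z * fst z))^2"
  have "BC_minus \<psi> = density torus_measure (\<lambda>z. ennreal (?h z))"
    unfolding BC_minus_def by (rule arg_cong[where f="density torus_measure"]) auto
  moreover have "integral\<^sup>L (density torus_measure (\<lambda>z. ennreal (?h z))) (tmono a b c d)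
       = (if int a - int b = 1 * (int c - int d) then Gk \<psi> (int c - int d) else 0)"
  proof (rule mom_generic[OF psi])
    show "?h \<in> borel_measurable (borel \<Otimes>\<^sub>M borel)" by measurable
    show "0 \<le> ?h z" for z using psi by (simp add: abs_square_le_1)
    show "?h (cis s, cis t) = Dk \<psi> 1 s t" for s t
      by (simp add: Dk_def cis_mult mult.assoc)
  qed
  ultimately show ?thesis by simp
qed




abbreviation "Tor \<equiv> sphere (0::complex) 1 \<times> sphere (0::complex) 1"

inductive_set TP :: "(complex \<times> complex \<Rightarrow> complex) set" where
  TP_mono: "tmono a b c d \<in> TP"
| TP_smult: "f \<in> TP \<Longrightarrow> (\<lambda>z. k * f z) \<in> TP"
| TP_add: "f \<in> TP \<Longrightarrow> g \<in> TP \<Longrightarrow> (\<lambda>z. f z + g z) \<in> TP"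

lemma mono_mult: "tmono a b c d z * tmono a' b' c' d' z = tmono (a+a') (b+b') (c+c') (d+d') z"
  by (simp add: tmono_def power_add algebra_simps)

lemma mono_cnj: "cnj (tmono a b c d z) = tmono b a d c z"
  by (simp add: tmono_def algebra_simps)

lemma TP_mult_mono: "f \<in> TP \<Longrightarrow> (\<lambda>z. f z * tmono a b c d z) \<in> TP"
proof (induction rule: TP.induct)
  case (TP_mono a' b' c' d')
  then show ?case unfolding mono_mult by (rule TP.TP_mono)
next
  case (TP_smult f k)
  then show ?case using TP.TP_smult[of _ k] by (simp add: mult.assoc)
next
  case (TP_add f g)
  then show ?case using TP.TP_add by (simp add: distrib_right)
qed

lemma TP_mult: assumes f: "f \<in> TP" shows "g \<in> TP \<Longrightarrow> (\<lambda>z. f z * g z) \<in> TP"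
proof (induction g rule: TP.induct)
  case (TP_mono a b c d)
  then show ?case using f by (rule TP_mult_mono)
next
  case (TP_smult g k)
  then show ?case using TP.TP_smult[of _ k] by (simp add: algebra_simps)
next
  case (TP_add g h)
  then show ?case using TP.TP_add by (simp add: distrib_left)
qed

lemma TP_cnj: "f \<in> TP \<Longrightarrow> (\<lambda>z. cnj (f z)) \<in> TP"
proof (induction rule: TP.induct)
  case (TP_mono a b c d)
  then show ?case unfolding mono_cnj by (rule TP.TP_mono)
next
  case (TP_smult f k)
  then show ?case using TP.TP_smult[of _ "cnj k"] by simp
next
  case (TP_add f g)
  then show ?case using TP.TP_add by simp
qed

lemma TP_cont: "f \<in> TP \<Longrightarrow> continuous_on UNIV f"
  by (induction rule: TP.induct) (auto simp: tmono_def intro!: continuous_intros)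

lemma TP_meas: "f \<in> TP \<Longrightarrow> f \<in> borel_measurable (borel \<Otimes>\<^sub>M borel)"
  by (induction rule: TP.induct) auto

lemma TP_bounded: "f \<in> TP \<Longrightarrow> \<exists>B. \<forall>z\<in>Tor. norm (f z) \<le> B"
proof -
  assume "f \<in> TP"
  then have "continuous_on Tor f" using TP_cont continuous_on_subset by blast
  moreover have "compact Tor" by (intro compact_Times compact_sphere)
  ultimately have "bounded (f ` Tor)" by (intro compact_imp_bounded compact_continuous_image)
  then show ?thesis by (auto simp: bounded_iff)
qed

lemma TP_integrable:
  assumes "finite_measure \<mu>" "sets \<mu> = sets (borel \<Otimes>\<^sub>M borel)" "AE z in \<mu>. z \<in> Tor" "f \<in> TP"
  shows "integrable \<mu> f"
proof -
  obtain B where B: "\<forall>z\<in>Tor. norm (f z) \<le> B" using TP_bounded[OF assms(4)] by blast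
  have m: "f \<in> borel_measurable \<mu>"
    by (subst measurable_cong_sets[OF assms(2) refl]) (rule TP_meas[OF assms(4)])
  show ?thesis
    by (rule finite_measure.integrable_const_bound[OF assms(1) _ m, of B]) (use assms(3) B in auto)
qed

lemma TP_integral_eq:
  assumes "finite_measure \<mu>" "sets \<mu> = sets (borel \<Otimes>\<^sub>M borel)" "AE z in \<mu>. z \<in> Tor"
  assumes "finite_measure \<nu>" "sets \<nu> = sets (borel \<Otimes>\<^sub>M borel)" "AE z in \<nu>. z \<in> Tor"
  assumes eq: "\<And>a b c d. integral\<^sup>L \<mu> (tmono a b c d) = integral\<^sup>L \<nu> (tmono a b c d)"
  shows "f \<in> TP \<Longrightarrow> integral\<^sup>L \<mu> f = integral\<^sup>L \<nu> f"
proof (induction rule: TP.induct)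
  case (TP_mono a b c d)
  then show ?case by (rule eq)
next
  case (TP_smult f k)
  then show ?case by simp
next
  case (TP_add f g)
  then show ?case
    using TP_integrable[OF assms(1-3)] TP_integrable[OF assms(4-6)] by simp
qed

definition RTP :: "(complex \<times> complex \<Rightarrow> real) set" where
  "RTP = {(\<lambda>z. Re (f z)) | f. f \<in> TP}"

lemma RTP_I: "p \<in> TP \<Longrightarrow> (\<lambda>z. Re (p z)) \<in> RTP"
  unfolding RTP_def by blast

lemma mono_0: "tmono 0 0 0 0 z = 1" by (simp add: tmono_def)




lemma RTP_ring: "function_ring_on RTP Tor"
proof
  show "compact Tor" by (intro compact_Times compact_sphere)
next
  fix f assume "f \<in> RTP"
  then obtain p where "p \<in> TP" "f = (\<lambda>z. Re (p z))" by (auto simp: RTP_def)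
  moreover have "continuous_on Tor p" using continuous_on_subset[OF TP_cont[OF \<open>p \<in> TP\<close>]] by blast
  ultimately show "continuous_on Tor f" by (auto intro!: continuous_intros)
next
  fix f g assume "f \<in> RTP" "g \<in> RTP"
  then obtain p q where pq: "p \<in> TP" "q \<in> TP" "f = (\<lambda>z. Re (p z))" "g = (\<lambda>z. Re (q z))"
    by (auto simp: RTP_def)
  have "(\<lambda>z. p z + q z) \<in> TP" using pq by (intro TP_add)
  from RTP_I[OF this] show "(\<lambda>x. f x + g x) \<in> RTP" using pq by simp
  have tp: "(\<lambda>z. (1/2) * (p z * q z) + (1/2) * (p z * cnj (q z))) \<in> TP"
    using pq by (intro TP_add TP_smult TP_mult TP_cnj)
  have eq: "(\<lambda>x. f x * g x) = (\<lambda>z. Re ((1/2) * (p z * q z) + (1/2) * (p z * cnj (q z))))"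
    using pq by (simp add: fun_eq_iff algebra_simps add_divide_distrib[symmetric])
  show "(\<lambda>x. f x * g x) \<in> RTP" unfolding eq using tp by (rule RTP_I)
next
  fix c :: real
  have tp: "(\<lambda>z. complex_of_real c * tmono 0 0 0 0 z) \<in> TP" by (intro TP_smult TP_mono)
  have eq: "(\<lambda>_::complex\<times>complex. c) = (\<lambda>z. Re (complex_of_real c * tmono 0 0 0 0 z))" by (simp add: mono_0)
  show "(\<lambda>_. c) \<in> RTP" unfolding eq using tp by (rule RTP_I)
next
  fix x y assume xy: "x \<in> Tor" "y \<in> Tor" "x \<noteq> y"
  have m1: "tmono (Suc 0) 0 0 0 z = fst z" and m2: "tmono 0 0 (Suc 0) 0 z = snd z" for z by (simp_all add: tmono_def)
  have r1: "(\<lambda>z. Re (fst z)) \<in> RTP" using RTP_I[OF TP_mono[of "Suc 0" 0 0 0]] by (simp add: m1)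
  have r2: "(\<lambda>z. Re (snd z)) \<in> RTP" using RTP_I[OF TP_mono[of 0 0 "Suc 0" 0]] by (simp add: m2)
  have r3: "(\<lambda>z. Im (fst z)) \<in> RTP"
  proof -
    have tp: "(\<lambda>z. (- \<i>) * tmono (Suc 0) 0 0 0 z) \<in> TP" by (intro TP_smult TP_mono)
    have eq: "(\<lambda>z. Im (fst z)) = (\<lambda>z. Re ((- \<i>) * tmono (Suc 0) 0 0 0 z))" by (simp add: m1)
    show ?thesis unfolding eq using tp by (rule RTP_I)
  qed
  have r4: "(\<lambda>z. Im (snd z)) \<in> RTP"
  proof -
    have tp: "(\<lambda>z. (- \<i>) * tmono 0 0 (Suc 0) 0 z) \<in> TP" by (intro TP_smult TP_mono)
    have eq: "(\<lambda>z. Im (snd z)) = (\<lambda>z. Re ((- \<i>) * tmono 0 0 (Suc 0) 0 z))" by (simp add: m2)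
    show ?thesis unfolding eq using tp by (rule RTP_I)
  qed
  have "Re (fst x) \<noteq> Re (fst y) \<or> Im (fst x) \<noteq> Im (fst y) \<or> Re (snd x) \<noteq> Re (snd y) \<or> Im (snd x) \<noteq> Im (snd y)"
    using xy(3) by (auto simp: complex_eq_iff prod_eq_iff)
  then show "\<exists>f\<in>RTP. f x \<noteq> f y"
    apply (elim disjE)
    subgoal by (rule bexI[OF _ r1]) simp
    subgoal by (rule bexI[OF _ r3]) simp
    subgoal by (rule bexI[OF _ r2]) simp
    subgoal by (rule bexI[OF _ r4]) simp
    done
qed


lemma fin_int_bound:
  fixes h :: "_ \<Rightarrow> real"
  assumes "finite_measure \<mu>" "integrable \<mu> h" "AE x in \<mu>. \<bar>h x\<bar> \<le> e"
  shows "\<bar>integral\<^sup>L \<mu> h\<bar> \<le> e * measure \<mu> (space \<mu>)"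
proof -
  interpret finite_measure \<mu> by fact
  have "\<bar>integral\<^sup>L \<mu> h\<bar> \<le> (\<integral>x. \<bar>h x\<bar> \<partial>\<mu>)"
    using integral_norm_bound[of \<mu> h] by simp
  also have "\<dots> \<le> (\<integral>x. e \<partial>\<mu>)"
    by (rule integral_mono_AE) (use assms in auto)
  also have "\<dots> = e * measure \<mu> (space \<mu>)" by simp
  finally show ?thesis .
qed

locale torus_pair =
  fixes \<mu> \<nu> :: "(complex \<times> complex) measure"
  assumes fin1: "finite_measure \<mu>" and sets1: "sets \<mu> = sets (borel \<Otimes>\<^sub>M borel)" and ae1: "AE z in \<mu>. z \<in> Tor"
  assumes fin2: "finite_measure \<nu>" and sets2: "sets \<nu> = sets (borel \<Otimes>\<^sub>M borel)" and ae2: "AE z in \<nu>. z \<in> Tor"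
  assumes eq: "\<And>a b c d. integral\<^sup>L \<mu> (tmono a b c d) = integral\<^sup>L \<nu> (tmono a b c d)"
begin

lemma cont_approx:
  fixes f :: "complex \<times> complex \<Rightarrow> real"
  assumes fc: "continuous_on UNIV f" and fb: "\<And>z. \<bar>f z\<bar> \<le> 1" and e: "e > 0"
  shows "\<bar>integral\<^sup>L \<mu> f - integral\<^sup>L \<nu> f\<bar> \<le> e * (measure \<mu> (space \<mu>) + measure \<nu> (space \<nu>))"
proof -
  interpret function_ring_on RTP Tor by (rule RTP_ring)
  have "continuous_on Tor f" using fc continuous_on_subset by blast
  from Stone_Weierstrass_basic[OF this e] obtain g where g: "g \<in> RTP" "\<forall>x\<in>Tor. \<bar>f x - g x\<bar> < e"
    by blast
  then obtain p where p: "p \<in> TP" "g = (\<lambda>z. Re (p z))" by (auto simp: RTP_def)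
  have ip1: "integrable \<mu> p" by (rule TP_integrable[OF fin1 sets1 ae1 p(1)])
  have ip2: "integrable \<nu> p" by (rule TP_integrable[OF fin2 sets2 ae2 p(1)])
  have ig1: "integrable \<mu> g" using ip1 p(2) by simp
  have ig2: "integrable \<nu> g" using ip2 p(2) by simp
  have geq: "integral\<^sup>L \<mu> g = integral\<^sup>L \<nu> g"
    using TP_integral_eq[OF fin1 sets1 ae1 fin2 sets2 ae2 eq p(1)] ip1 ip2 p(2) by simp
  have fm1: "f \<in> borel_measurable \<mu>"
    by (subst measurable_cong_sets[OF sets1 refl]) (simp add: borel_prod borel_measurable_continuous_onI[OF fc])
  have fm2: "f \<in> borel_measurable \<nu>"
    by (subst measurable_cong_sets[OF sets2 refl]) (simp add: borel_prod borel_measurable_continuous_onI[OF fc])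
  have if1: "integrable \<mu> f"
    by (rule finite_measure.integrable_const_bound[OF fin1 _ fm1, of 1]) (use fb in auto)
  have if2: "integrable \<nu> f"
    by (rule finite_measure.integrable_const_bound[OF fin2 _ fm2, of 1]) (use fb in auto)
  have b1: "\<bar>integral\<^sup>L \<mu> (\<lambda>x. f x - g x)\<bar> \<le> e * measure \<mu> (space \<mu>)"
    by (rule fin_int_bound[OF fin1]) (use if1 ig1 ae1 g(2) in \<open>auto elim!: eventually_mono intro: less_imp_le\<close>)
  have b2: "\<bar>integral\<^sup>L \<nu> (\<lambda>x. f x - g x)\<bar> \<le> e * measure \<nu> (space \<nu>)"
    by (rule fin_int_bound[OF fin2]) (use if2 ig2 ae2 g(2) in \<open>auto elim!: eventually_mono intro: less_imp_le\<close>)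
  show ?thesis using b1 b2 geq if1 if2 ig1 ig2 by (simp add: algebra_simps)
qed

lemma cont_eq:
  fixes f :: "complex \<times> complex \<Rightarrow> real"
  assumes fc: "continuous_on UNIV f" and fb: "\<And>z. \<bar>f z\<bar> \<le> 1"
  shows "integral\<^sup>L \<mu> f = integral\<^sup>L \<nu> f"
proof (rule ccontr)
  let ?M = "measure \<mu> (space \<mu>) + measure \<nu> (space \<nu>)"
  let ?d = "\<bar>integral\<^sup>L \<mu> f - integral\<^sup>L \<nu> f\<bar>"
  assume "integral\<^sup>L \<mu> f \<noteq> integral\<^sup>L \<nu> f"
  then have d: "?d > 0" by simp
  have M: "?M \<ge> 0" by simp
  have "?M + 1 > 0" using M zero_less_one by (rule add_nonneg_pos)
  then have M1: "2 * (?M + 1) > 0" by simp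
  have "?d \<le> (?d / (2 * (?M + 1))) * ?M"
    by (rule cont_approx[OF fc fb]) (rule divide_pos_pos[OF d M1])
  also have "\<dots> = ?d * (?M / (2 * (?M + 1)))" by simp
  also have "?M / (2 * (?M + 1)) < 1" using M M1 by (simp add: divide_less_eq)
  then have "?d * (?M / (2 * (?M + 1))) < ?d * 1" by (rule mult_strict_left_mono[OF _ d])
  finally show False by simp
qed

lemma space1: "space \<mu> = UNIV" using sets_eq_imp_space_eq[OF sets1] unfolding borel_prod by simp
lemma space2: "space \<nu> = UNIV" using sets_eq_imp_space_eq[OF sets2] unfolding borel_prod by simp

lemma closed_eq:
  assumes F: "closed F"
  shows "measure \<mu> F = measure \<nu> F"
proof (cases "F = {}")
  case True then show ?thesis by simp
next
  case False
  define s where "s n z = max 0 (1 - real n * infdist z F)" for n z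
  have sc: "continuous_on UNIV (s n)" for n unfolding s_def by (intro continuous_intros)
  have sb: "\<bar>s n z\<bar> \<le> 1" for n z unfolding s_def using infdist_nonneg[of z F] by auto
  have lim: "(\<lambda>n. s n z) \<longlonglongrightarrow> indicator F z" for z
  proof (cases "z \<in> F")
    case True then show ?thesis by (simp add: s_def)
  next
    case nz: False
    then have pos: "infdist z F > 0"
      using in_closed_iff_infdist_zero[OF F False] infdist_nonneg[of z F] by auto
    obtain N :: nat where N: "1 < real N * infdist z F" using ex_less_of_nat_mult[OF pos] by blast
    have "eventually (\<lambda>n. s n z = 0) sequentially"
    proof (rule eventually_sequentiallyI[of N])
      fix n assume "N \<le> n"
      then have "real N * infdist z F \<le> real n * infdist z F"
        using pos by (intro mult_right_mono) auto
      then show "s n z = 0" using N by (simp add: s_def)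
    qed
    then have "(\<lambda>n. s n z) \<longlonglongrightarrow> 0" by (rule tendsto_eventually)
    then show ?thesis using nz by simp
  qed
  have Fb: "F \<in> sets (borel \<Otimes>\<^sub>M borel)" using F unfolding borel_prod by simp
  have conv: "(\<lambda>n. integral\<^sup>L M (s n)) \<longlonglongrightarrow> measure M F"
    if fin: "finite_measure M" and sM: "sets M = sets (borel \<Otimes>\<^sub>M borel)" for M
  proof -
    interpret finite_measure M by (rule fin)
    have sp: "space M = UNIV" using sets_eq_imp_space_eq[OF sM] unfolding borel_prod by simp
    have m: "g \<in> borel_measurable M" if "continuous_on UNIV g" for g :: "_ \<Rightarrow> real"
      by (subst measurable_cong_sets[OF sM refl]) (simp add: borel_prod borel_measurable_continuous_onI[OF that])
    have "(\<lambda>n. integral\<^sup>L M (s n)) \<longlonglongrightarrow> integral\<^sup>L M (indicator F)"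
    proof (rule integral_dominated_convergence[where w="\<lambda>_. 1"])
      show "indicator F \<in> borel_measurable M"
        using Fb sM by (simp add: borel_measurable_indicator_iff sp)
      show "s n \<in> borel_measurable M" for n by (rule m[OF sc])
    qed (use lim sb in auto)
    then show ?thesis by (simp add: sp)
  qed
  show ?thesis using LIMSEQ_unique[OF conv[OF fin1 sets1]] conv[OF fin2 sets2] cont_eq[OF sc sb] by simp
qed

lemma measures_eq: "\<mu> = \<nu>"
proof (rule measure_eqI_generator_eq[where E="Collect closed" and \<Omega>=UNIV and A="\<lambda>_. UNIV"])
  show "Int_stable (Collect closed)" by (auto intro!: Int_stableI)
  show "Collect closed \<subseteq> Pow UNIV" by simp
  have sb: "sets (borel \<Otimes>\<^sub>M borel) = sigma_sets UNIV (Collect closed :: (complex \<times> complex) set set)"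
  proof -
    have "sets (borel \<Otimes>\<^sub>M borel) = sets (borel :: (complex \<times> complex) measure)" by (simp only: borel_prod)
    also have "\<dots> = sigma_sets UNIV (Collect closed)" by (subst borel_eq_closed) (rule sets_measure_of; simp)
    finally show ?thesis .
  qed
  show "sets \<mu> = sigma_sets UNIV (Collect closed)" using sets1 sb by simp
  show "sets \<nu> = sigma_sets UNIV (Collect closed)" using sets2 sb by simp
  fix X :: "(complex \<times> complex) set" assume "X \<in> Collect closed"
  then show "emeasure \<mu> X = emeasure \<nu> X"
    using closed_eq[of X] finite_measure.emeasure_eq_measure[OF fin1] finite_measure.emeasure_eq_measure[OF fin2]
    by simp
next
  show "range (\<lambda>_. UNIV) \<subseteq> Collect closed" by auto
  show "(\<Union>i. UNIV) = UNIV" by simp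
  show "emeasure \<mu> UNIV \<noteq> \<infinity>" for i :: nat using finite_measure.emeasure_finite[OF fin1] by simp
qed

end




definition torusP :: "(complex \<times> complex) measure \<Rightarrow> bool" where
  "torusP \<mu> \<longleftrightarrow> finite_measure \<mu> \<and> sets \<mu> = sets (borel \<Otimes>\<^sub>M borel) \<and> (AE z in \<mu>. z \<in> Tor)"

lemma Tor_sets: "Tor \<in> sets (borel \<Otimes>\<^sub>M borel)"
proof -
  have "closed Tor" by (intro closed_Times closed_sphere)
  then show ?thesis unfolding borel_prod by (rule borel_closed)
qed

lemma measure_unique:
  assumes "torusP \<mu>" "torusP \<nu>" "\<And>a b c d. integral\<^sup>L \<mu> (tmono a b c d) = integral\<^sup>L \<nu> (tmono a b c d)"
  shows "\<mu> = \<nu>"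
proof -
  interpret torus_pair \<mu> \<nu> using assms unfolding torusP_def torus_pair_def by blast
  show ?thesis by (rule measures_eq)
qed

lemma torus_AE: "AE z in torus_measure. z \<in> Tor"
proof -
  have S: "{x \<in> space (borel \<Otimes>\<^sub>M borel). x \<in> Tor} \<in> sets (borel \<Otimes>\<^sub>M borel)"
    using Tor_sets by (simp add: space_pair_measure)
  have m: "(\<lambda>x. (cis (fst x), cis (snd x))) \<in> measurable (Rm \<Otimes>\<^sub>M Rm) (borel \<Otimes>\<^sub>M borel)"
    by measurable
  show ?thesis
    unfolding torus_distr AE_distr_iff[OF m S] by (simp add: mem_Times_iff)
qed


lemma density_torusP:
  fixes h :: "complex \<times> complex \<Rightarrow> real"
  assumes hm: "h \<in> borel_measurable (borel \<Otimes>\<^sub>M borel)"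
    and mom0: "integral\<^sup>L (density torus_measure (\<lambda>z. ennreal (h z))) (tmono 0 0 0 0) = 1"
  shows "torusP (density torus_measure (\<lambda>z. ennreal (h z)))"
proof -
  let ?D = "density torus_measure (\<lambda>z. ennreal (h z))"
  have hm': "(\<lambda>z. ennreal (h z)) \<in> borel_measurable torus_measure"
    by (subst measurable_cong_sets[OF torus_sets refl]) (rule measurable_compose[OF hm measurable_ennreal])
  have "tmono 0 0 0 0 = (\<lambda>_. 1)" by (simp add: fun_eq_iff mono_0)
  then have "measure ?D (space ?D) = 1" using mom0 by (simp add: scaleR_conv_of_real)
  then have "emeasure ?D (space ?D) \<noteq> \<infinity>" by (auto simp: measure_def)
  then have "finite_measure ?D" by (rule finite_measureI)
  moreover have "sets ?D = sets (borel \<Otimes>\<^sub>M borel)" by (simp add: torus_sets)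
  moreover have "AE z in ?D. z \<in> Tor"
    unfolding AE_density[OF hm'] using torus_AE by (rule eventually_mono) simp
  ultimately show ?thesis unfolding torusP_def by blast
qed

lemma Gk_zero[simp]: "Gk \<psi> 0 = 1" by (simp add: Gk_def)


lemma BC_plus_eq: "BC_plus \<psi> = density torus_measure (\<lambda>z. ennreal (1 / (4 * pi^2) * (1 - (cmod \<psi>)^2) / (cmod (1 - \<psi> * snd z * cnj (fst z)))^2))"
  unfolding BC_plus_def by (rule arg_cong[where f="density torus_measure"]) (simp add: fun_eq_iff split_beta)

lemma BC_minus_eq: "BC_minus \<psi> = density torus_measure (\<lambda>z. ennreal (1 / (4 * pi^2) * (1 - (cmod \<psi>)^2) / (cmod (1 - \<psi> * snd z * fst z))^2))"
  unfolding BC_minus_def by (rule arg_cong[where f="density torus_measure"]) (simp add: fun_eq_iff split_beta)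

lemma BC_plus_torusP:
  assumes "cmod \<psi> < 1" shows "torusP (BC_plus \<psi>)"
proof -
  have "integral\<^sup>L (BC_plus \<psi>) (tmono 0 0 0 0) = 1" using mom_plus[OF assms, of 0 0 0 0] by simp
  then show ?thesis unfolding BC_plus_eq by (intro density_torusP) measurable
qed

lemma BC_minus_torusP:
  assumes "cmod \<psi> < 1" shows "torusP (BC_minus \<psi>)"
proof -
  have "integral\<^sup>L (BC_minus \<psi>) (tmono 0 0 0 0) = 1" using mom_minus[OF assms, of 0 0 0 0] by simp
  then show ?thesis unfolding BC_minus_eq by (intro density_torusP) measurable
qed


lemma mono_prod: "tmono a b c d (u1 * u2, v1 * v2) = tmono a b c d (u1, v1) * tmono a b c d (u2, v2)"
  by (simp add: tmono_def power_mult_distrib algebra_simps)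

lemma mono_pow: "tmono a b c d (u ^ n, v ^ n) = tmono (n*a) (n*b) (n*c) (n*d) (u, v)"
  by (simp add: tmono_def power_mult[symmetric] mult.commute)

lemma law_facts:
  assumes "has_law M X \<mu>" "torusP \<mu>"
  shows "X \<in> measurable M (borel \<Otimes>\<^sub>M borel)" "distr M (borel \<Otimes>\<^sub>M borel) X = \<mu>"
    "AE \<omega> in M. X \<omega> \<in> Tor" "\<And>a b c d. integrable M (\<lambda>\<omega>. tmono a b c d (X \<omega>))"
    "\<And>a b c d. integral\<^sup>L M (\<lambda>\<omega>. tmono a b c d (X \<omega>)) = integral\<^sup>L \<mu> (tmono a b c d)"
proof -
  have s: "sets \<mu> = sets (borel \<Otimes>\<^sub>M borel)" using assms(2) by (simp add: torusP_def)
  show m: "X \<in> measurable M (borel \<Otimes>\<^sub>M borel)"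
  proof -
    have "X \<in> measurable M \<mu>" using assms(1) by (simp add: has_law_def)
    then show ?thesis by (subst (asm) measurable_cong_sets[OF refl s])
  qed
  show d: "distr M (borel \<Otimes>\<^sub>M borel) X = \<mu>"
    using assms(1) distr_cong[OF refl s, where f=X and g=X] by (simp add: has_law_def)
  have S: "{x \<in> space (borel \<Otimes>\<^sub>M borel). x \<in> Tor} \<in> sets (borel \<Otimes>\<^sub>M borel)"
    using Tor_sets by (simp add: space_pair_measure)
  have "AE z in \<mu>. z \<in> Tor" using assms(2) by (simp add: torusP_def)
  then show "AE \<omega> in M. X \<omega> \<in> Tor" unfolding d[symmetric] AE_distr_iff[OF m S] .
  fix a b c d
  have "integrable \<mu> (tmono a b c d)"
    using assms(2) unfolding torusP_def by (intro TP_integrable TP_mono) auto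
  then show "integrable M (\<lambda>\<omega>. tmono a b c d (X \<omega>))"
    unfolding d[symmetric] integrable_distr_eq[OF m mono_measurable] .
  show "integral\<^sup>L M (\<lambda>\<omega>. tmono a b c d (X \<omega>)) = integral\<^sup>L \<mu> (tmono a b c d)"
    unfolding d[symmetric] by (rule integral_distr[OF m mono_measurable, symmetric])
qed

lemma law_from:
  assumes P: "prob_space M" and m: "Y \<in> measurable M (borel \<Otimes>\<^sub>M borel)" and tn: "torusP \<nu>"
    and ae: "AE \<omega> in M. Y \<omega> \<in> Tor"
    and mom: "\<And>a b c d. integral\<^sup>L M (\<lambda>\<omega>. tmono a b c d (Y \<omega>)) = integral\<^sup>L \<nu> (tmono a b c d)"
  shows "has_law M Y \<nu>"
proof -
  interpret prob_space M by (rule P)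
  have s: "sets \<nu> = sets (borel \<Otimes>\<^sub>M borel)" using tn by (simp add: torusP_def)
  have S: "{x \<in> space (borel \<Otimes>\<^sub>M borel). x \<in> Tor} \<in> sets (borel \<Otimes>\<^sub>M borel)"
    using Tor_sets by (simp add: space_pair_measure)
  have "torusP (distr M (borel \<Otimes>\<^sub>M borel) Y)"
    unfolding torusP_def
  proof (intro conjI)
    show "finite_measure (distr M (borel \<Otimes>\<^sub>M borel) Y)"
      using prob_space_distr[OF m] by (simp add: prob_space_def)
    show "AE z in distr M (borel \<Otimes>\<^sub>M borel) Y. z \<in> Tor" unfolding AE_distr_iff[OF m S] by (rule ae)
  qed simp
  then have "distr M (borel \<Otimes>\<^sub>M borel) Y = \<nu>"
  proof (rule measure_unique[OF _ tn])
    fix a b c d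
    show "integral\<^sup>L (distr M (borel \<Otimes>\<^sub>M borel) Y) (tmono a b c d) = integral\<^sup>L \<nu> (tmono a b c d)"
      using integral_distr[OF m mono_measurable] mom by simp
  qed
  moreover have "distr M \<nu> Y = distr M (borel \<Otimes>\<^sub>M borel) Y" by (rule distr_cong[OF refl s]) simp
  moreover have "Y \<in> measurable M \<nu>" using m by (subst measurable_cong_sets[OF refl s])
  ultimately show ?thesis by (simp add: has_law_def)
qed

lemma prod_law:
  fixes X1 X2 :: "'a \<Rightarrow> complex \<times> complex"
  assumes P: "prob_space M"
   and h1: "has_law M X1 \<mu>1" and h2: "has_law M X2 \<mu>2"
   and ind: "prob_space.indep_var M (borel \<Otimes>\<^sub>M borel) X1 (borel \<Otimes>\<^sub>M borel) X2"
   and t1: "torusP \<mu>1" and t2: "torusP \<mu>2" and tn: "torusP \<nu>"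
   and mom: "\<And>a b c d. integral\<^sup>L \<mu>1 (tmono a b c d) * integral\<^sup>L \<mu>2 (tmono a b c d) = integral\<^sup>L \<nu> (tmono a b c d)"
  shows "has_law M (\<lambda>\<omega>. (fst (X1 \<omega>) * fst (X2 \<omega>), snd (X1 \<omega>) * snd (X2 \<omega>))) \<nu>"
proof -
  interpret prob_space M by (rule P)
  note F1 = law_facts[OF h1 t1] and F2 = law_facts[OF h2 t2]
  note [measurable] = F1(1) F2(1)
  show ?thesis
  proof (rule law_from[OF P _ tn])
    show "(\<lambda>\<omega>. (fst (X1 \<omega>) * fst (X2 \<omega>), snd (X1 \<omega>) * snd (X2 \<omega>))) \<in> measurable M (borel \<Otimes>\<^sub>M borel)"
      by measurable
    show "AE \<omega> in M. (fst (X1 \<omega>) * fst (X2 \<omega>), snd (X1 \<omega>) * snd (X2 \<omega>)) \<in> Tor"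
      using F1(3) F2(3) by eventually_elim (auto simp: mem_Times_iff norm_mult)
    fix a b c d
    have ind': "indep_var borel (\<lambda>\<omega>. tmono a b c d (X1 \<omega>)) borel (\<lambda>\<omega>. tmono a b c d (X2 \<omega>))"
      using indep_var_compose[OF ind mono_measurable mono_measurable] by (simp add: comp_def)
    have "integral\<^sup>L M (\<lambda>\<omega>. tmono a b c d (fst (X1 \<omega>) * fst (X2 \<omega>), snd (X1 \<omega>) * snd (X2 \<omega>)))
        = integral\<^sup>L M (\<lambda>\<omega>. tmono a b c d (X1 \<omega>) * tmono a b c d (X2 \<omega>))"
      by (simp add: mono_prod)
    also have "\<dots> = integral\<^sup>L M (\<lambda>\<omega>. tmono a b c d (X1 \<omega>)) * integral\<^sup>L M (\<lambda>\<omega>. tmono a b c d (X2 \<omega>))"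
      by (rule indep_var_lebesgue_integral[OF ind' F1(4) F2(4)])
    also have "\<dots> = integral\<^sup>L \<nu> (tmono a b c d)" using F1(5) F2(5) mom by simp
    finally show "integral\<^sup>L M (\<lambda>\<omega>. tmono a b c d (fst (X1 \<omega>) * fst (X2 \<omega>), snd (X1 \<omega>) * snd (X2 \<omega>))) = integral\<^sup>L \<nu> (tmono a b c d)" .
  qed
qed

lemma pow_law:
  fixes X :: "'a \<Rightarrow> complex \<times> complex"
  assumes P: "prob_space M" and h: "has_law M X \<mu>" and t: "torusP \<mu>" and tn: "torusP \<nu>"
   and mom: "\<And>a b c d. integral\<^sup>L \<mu> (tmono (n*a) (n*b) (n*c) (n*d)) = integral\<^sup>L \<nu> (tmono a b c d)"
  shows "has_law M (\<lambda>\<omega>. (fst (X \<omega>) ^ n, snd (X \<omega>) ^ n)) \<nu>"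
proof -
  note F = law_facts[OF h t]
  note [measurable] = F(1)
  show ?thesis
  proof (rule law_from[OF P _ tn])
    show "(\<lambda>\<omega>. (fst (X \<omega>) ^ n, snd (X \<omega>) ^ n)) \<in> measurable M (borel \<Otimes>\<^sub>M borel)"
      by measurable
    show "AE \<omega> in M. (fst (X \<omega>) ^ n, snd (X \<omega>) ^ n) \<in> Tor"
      using F(3) by eventually_elim (auto simp: mem_Times_iff norm_power)
    fix a b c d
    show "integral\<^sup>L M (\<lambda>\<omega>. tmono a b c d (fst (X \<omega>) ^ n, snd (X \<omega>) ^ n)) = integral\<^sup>L \<nu> (tmono a b c d)"
      using F(5)[of "n*a" "n*b" "n*c" "n*d"] mom by (simp add: mono_pow)
  qed
qed


lemma Gk_mult: "Gk \<psi>1 k * Gk \<psi>2 k = Gk (\<psi>1 * \<psi>2) k"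
  by (simp add: Gk_def power_mult_distrib)

lemma Gk_pow: "0 < n \<Longrightarrow> Gk \<psi> (int n * k) = Gk (\<psi> ^ n) k"
proof -
  assume n: "0 < n"
  have e1: "nat (- (int n * k)) = n * nat (-k)"
  proof -
    have "- (int n * k) = int n * (- k)" by simp
    then show ?thesis by (simp only: nat_mult_distrib of_nat_0_le_iff nat_int)
  qed
  have e2: "nat (int n * k) = n * nat k" by (simp add: nat_mult_distrib)
  show ?thesis using n by (auto simp: Gk_def e1 e2 power_mult zero_le_mult_iff mult_le_0_iff)
qed

lemma Gk_0: "Gk 0 k = (if k = 0 then 1 else 0)"
  by (simp add: Gk_def)

lemma nat_diff_mult: "int (n * a) - int (n * b) = int n * (int a - int b)"
  by (simp add: algebra_simps)

lemma norm_lt1_mult: "cmod (\<psi>1::complex) < 1 \<Longrightarrow> cmod \<psi>2 < 1 \<Longrightarrow> cmod (\<psi>1 * \<psi>2) < 1"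
proof -
  assume a: "cmod \<psi>1 < 1" "cmod \<psi>2 < 1"
  have "cmod \<psi>1 * cmod \<psi>2 \<le> cmod \<psi>1" using a by (intro mult_left_le) auto
  then show ?thesis using a by (simp add: norm_mult)
qed

lemma norm_lt1_pow: "cmod (\<psi>::complex) < 1 \<Longrightarrow> 1 \<le> n \<Longrightarrow> cmod (\<psi> ^ n) < 1"
  by (simp add: norm_power power_less_one_iff)




lemma cond_plus: "0 < n \<Longrightarrow> (int n * x = - (int n * y)) = (x = - (y::int))"
  by (metis minus_mult_right mult_cancel_left of_nat_0_less_iff less_irrefl)
lemma cond_minus: "0 < n \<Longrightarrow> (int n * x = int n * y) = (x = (y::int))"
  by simp

theorem mainTheorem9:
  fixes M :: "'a measure"
  assumes "prob_space M"
  shows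
   "(\<forall>\<psi>1 \<psi>2 ZU1 ZV1 ZU2 ZV2. cmod \<psi>1 < 1 \<and> cmod \<psi>2 < 1
       \<and> has_law M (\<lambda>\<omega>. (ZU1 \<omega>, ZV1 \<omega>)) (BC_plus \<psi>1)
       \<and> has_law M (\<lambda>\<omega>. (ZU2 \<omega>, ZV2 \<omega>)) (BC_plus \<psi>2)
       \<and> prob_space.indep_var M (borel \<Otimes>\<^sub>M borel) (\<lambda>\<omega>. (ZU1 \<omega>, ZV1 \<omega>))
                                 (borel \<Otimes>\<^sub>M borel) (\<lambda>\<omega>. (ZU2 \<omega>, ZV2 \<omega>))
       \<longrightarrow> has_law M (\<lambda>\<omega>. (ZU1 \<omega> * ZU2 \<omega>, ZV1 \<omega> * ZV2 \<omega>)) (BC_plus (\<psi>1 * \<psi>2)))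
  \<and> (\<forall>\<psi>1 \<psi>2 ZU1 ZV1 ZU2 ZV2. cmod \<psi>1 < 1 \<and> cmod \<psi>2 < 1
       \<and> has_law M (\<lambda>\<omega>. (ZU1 \<omega>, ZV1 \<omega>)) (BC_minus \<psi>1)
       \<and> has_law M (\<lambda>\<omega>. (ZU2 \<omega>, ZV2 \<omega>)) (BC_minus \<psi>2)
       \<and> prob_space.indep_var M (borel \<Otimes>\<^sub>M borel) (\<lambda>\<omega>. (ZU1 \<omega>, ZV1 \<omega>))
                                 (borel \<Otimes>\<^sub>M borel) (\<lambda>\<omega>. (ZU2 \<omega>, ZV2 \<omega>))
       \<longrightarrow> has_law M (\<lambda>\<omega>. (ZU1 \<omega> * ZU2 \<omega>, ZV1 \<omega> * ZV2 \<omega>)) (BC_minus (\<psi>1 * \<psi>2)))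
  \<and> (\<forall>\<psi>1 \<psi>2 ZU1 ZV1 ZU2 ZV2. cmod \<psi>1 < 1 \<and> cmod \<psi>2 < 1
       \<and> has_law M (\<lambda>\<omega>. (ZU1 \<omega>, ZV1 \<omega>)) (BC_plus \<psi>1)
       \<and> has_law M (\<lambda>\<omega>. (ZU2 \<omega>, ZV2 \<omega>)) (BC_minus \<psi>2)
       \<and> prob_space.indep_var M (borel \<Otimes>\<^sub>M borel) (\<lambda>\<omega>. (ZU1 \<omega>, ZV1 \<omega>))
                                 (borel \<Otimes>\<^sub>M borel) (\<lambda>\<omega>. (ZU2 \<omega>, ZV2 \<omega>))
       \<longrightarrow> has_law M (\<lambda>\<omega>. (ZU1 \<omega> * ZU2 \<omega>, ZV1 \<omega> * ZV2 \<omega>)) (BC_plus 0))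
  \<and> (\<forall>\<psi> ZU ZV (n::nat). cmod \<psi> < 1 \<and> n \<ge> 1
       \<and> has_law M (\<lambda>\<omega>. (ZU \<omega>, ZV \<omega>)) (BC_plus \<psi>)
       \<longrightarrow> has_law M (\<lambda>\<omega>. (ZU \<omega> ^ n, ZV \<omega> ^ n)) (BC_plus (\<psi> ^ n)))
  \<and> (\<forall>\<psi> ZU ZV (n::nat). cmod \<psi> < 1 \<and> n \<ge> 1
       \<and> has_law M (\<lambda>\<omega>. (ZU \<omega>, ZV \<omega>)) (BC_minus \<psi>)
       \<longrightarrow> has_law M (\<lambda>\<omega>. (ZU \<omega> ^ n, ZV \<omega> ^ n)) (BC_minus (\<psi> ^ n)))"
proof -
  have P: "prob_space M" by fact
  have A: "cmod \<psi>1 < 1 \<and> cmod \<psi>2 < 1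
       \<and> has_law M (\<lambda>\<omega>. (ZU1 \<omega>, ZV1 \<omega>)) (BC_plus \<psi>1)
       \<and> has_law M (\<lambda>\<omega>. (ZU2 \<omega>, ZV2 \<omega>)) (BC_plus \<psi>2)
       \<and> prob_space.indep_var M (borel \<Otimes>\<^sub>M borel) (\<lambda>\<omega>. (ZU1 \<omega>, ZV1 \<omega>))
                                 (borel \<Otimes>\<^sub>M borel) (\<lambda>\<omega>. (ZU2 \<omega>, ZV2 \<omega>))
       \<longrightarrow> has_law M (\<lambda>\<omega>. (ZU1 \<omega> * ZU2 \<omega>, ZV1 \<omega> * ZV2 \<omega>)) (BC_plus (\<psi>1 * \<psi>2))"
    for \<psi>1 \<psi>2 ZU1 ZV1 ZU2 ZV2
  proof (intro impI, elim conjE)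
    assume a: "cmod \<psi>1 < 1" "cmod \<psi>2 < 1" "has_law M (\<lambda>\<omega>. (ZU1 \<omega>, ZV1 \<omega>)) (BC_plus \<psi>1)"
      "has_law M (\<lambda>\<omega>. (ZU2 \<omega>, ZV2 \<omega>)) (BC_plus \<psi>2)"
      "prob_space.indep_var M (borel \<Otimes>\<^sub>M borel) (\<lambda>\<omega>. (ZU1 \<omega>, ZV1 \<omega>)) (borel \<Otimes>\<^sub>M borel) (\<lambda>\<omega>. (ZU2 \<omega>, ZV2 \<omega>))"
    have "has_law M (\<lambda>\<omega>. (fst (ZU1 \<omega>, ZV1 \<omega>) * fst (ZU2 \<omega>, ZV2 \<omega>), snd (ZU1 \<omega>, ZV1 \<omega>) * snd (ZU2 \<omega>, ZV2 \<omega>))) (BC_plus (\<psi>1 * \<psi>2))"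
      by (rule prod_law[OF P a(3,4,5) BC_plus_torusP[OF a(1)] BC_plus_torusP[OF a(2)]
            BC_plus_torusP[OF norm_lt1_mult[OF a(1,2)]]])
         (simp add: mom_plus a norm_lt1_mult Gk_mult)
    then show "has_law M (\<lambda>\<omega>. (ZU1 \<omega> * ZU2 \<omega>, ZV1 \<omega> * ZV2 \<omega>)) (BC_plus (\<psi>1 * \<psi>2))" by simp
  qed
  have B: "cmod \<psi>1 < 1 \<and> cmod \<psi>2 < 1
       \<and> has_law M (\<lambda>\<omega>. (ZU1 \<omega>, ZV1 \<omega>)) (BC_minus \<psi>1)
       \<and> has_law M (\<lambda>\<omega>. (ZU2 \<omega>, ZV2 \<omega>)) (BC_minus \<psi>2)
       \<and> prob_space.indep_var M (borel \<Otimes>\<^sub>M borel) (\<lambda>\<omega>. (ZU1 \<omega>, ZV1 \<omega>))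
                                 (borel \<Otimes>\<^sub>M borel) (\<lambda>\<omega>. (ZU2 \<omega>, ZV2 \<omega>))
       \<longrightarrow> has_law M (\<lambda>\<omega>. (ZU1 \<omega> * ZU2 \<omega>, ZV1 \<omega> * ZV2 \<omega>)) (BC_minus (\<psi>1 * \<psi>2))"
    for \<psi>1 \<psi>2 ZU1 ZV1 ZU2 ZV2
  proof (intro impI, elim conjE)
    assume a: "cmod \<psi>1 < 1" "cmod \<psi>2 < 1" "has_law M (\<lambda>\<omega>. (ZU1 \<omega>, ZV1 \<omega>)) (BC_minus \<psi>1)"
      "has_law M (\<lambda>\<omega>. (ZU2 \<omega>, ZV2 \<omega>)) (BC_minus \<psi>2)"
      "prob_space.indep_var M (borel \<Otimes>\<^sub>M borel) (\<lambda>\<omega>. (ZU1 \<omega>, ZV1 \<omega>)) (borel \<Otimes>\<^sub>M borel) (\<lambda>\<omega>. (ZU2 \<omega>, ZV2 \<omega>))"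
    have "has_law M (\<lambda>\<omega>. (fst (ZU1 \<omega>, ZV1 \<omega>) * fst (ZU2 \<omega>, ZV2 \<omega>), snd (ZU1 \<omega>, ZV1 \<omega>) * snd (ZU2 \<omega>, ZV2 \<omega>))) (BC_minus (\<psi>1 * \<psi>2))"
      by (rule prod_law[OF P a(3,4,5) BC_minus_torusP[OF a(1)] BC_minus_torusP[OF a(2)]
            BC_minus_torusP[OF norm_lt1_mult[OF a(1,2)]]])
         (simp add: mom_minus a norm_lt1_mult Gk_mult)
    then show "has_law M (\<lambda>\<omega>. (ZU1 \<omega> * ZU2 \<omega>, ZV1 \<omega> * ZV2 \<omega>)) (BC_minus (\<psi>1 * \<psi>2))" by simp
  qed
  have C: "cmod \<psi>1 < 1 \<and> cmod \<psi>2 < 1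
       \<and> has_law M (\<lambda>\<omega>. (ZU1 \<omega>, ZV1 \<omega>)) (BC_plus \<psi>1)
       \<and> has_law M (\<lambda>\<omega>. (ZU2 \<omega>, ZV2 \<omega>)) (BC_minus \<psi>2)
       \<and> prob_space.indep_var M (borel \<Otimes>\<^sub>M borel) (\<lambda>\<omega>. (ZU1 \<omega>, ZV1 \<omega>))
                                 (borel \<Otimes>\<^sub>M borel) (\<lambda>\<omega>. (ZU2 \<omega>, ZV2 \<omega>))
       \<longrightarrow> has_law M (\<lambda>\<omega>. (ZU1 \<omega> * ZU2 \<omega>, ZV1 \<omega> * ZV2 \<omega>)) (BC_plus 0)"
    for \<psi>1 \<psi>2 ZU1 ZV1 ZU2 ZV2
  proof (intro impI, elim conjE)
    assume a: "cmod \<psi>1 < 1" "cmod \<psi>2 < 1" "has_law M (\<lambda>\<omega>. (ZU1 \<omega>, ZV1 \<omega>)) (BC_plus \<psi>1)"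
      "has_law M (\<lambda>\<omega>. (ZU2 \<omega>, ZV2 \<omega>)) (BC_minus \<psi>2)"
      "prob_space.indep_var M (borel \<Otimes>\<^sub>M borel) (\<lambda>\<omega>. (ZU1 \<omega>, ZV1 \<omega>)) (borel \<Otimes>\<^sub>M borel) (\<lambda>\<omega>. (ZU2 \<omega>, ZV2 \<omega>))"
    have z: "cmod (0::complex) < 1" by simp
    have "has_law M (\<lambda>\<omega>. (fst (ZU1 \<omega>, ZV1 \<omega>) * fst (ZU2 \<omega>, ZV2 \<omega>), snd (ZU1 \<omega>, ZV1 \<omega>) * snd (ZU2 \<omega>, ZV2 \<omega>))) (BC_plus 0)"
      by (rule prod_law[OF P a(3,4,5) BC_plus_torusP[OF a(1)] BC_minus_torusP[OF a(2)]
            BC_plus_torusP[OF z]])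
         (simp add: mom_plus mom_minus a Gk_0)
    then show "has_law M (\<lambda>\<omega>. (ZU1 \<omega> * ZU2 \<omega>, ZV1 \<omega> * ZV2 \<omega>)) (BC_plus 0)" by simp
  qed
  have D: "cmod \<psi> < 1 \<and> n \<ge> 1
       \<and> has_law M (\<lambda>\<omega>. (ZU \<omega>, ZV \<omega>)) (BC_plus \<psi>)
       \<longrightarrow> has_law M (\<lambda>\<omega>. (ZU \<omega> ^ n, ZV \<omega> ^ n)) (BC_plus (\<psi> ^ n))" for \<psi> ZU ZV and n :: nat
  proof (intro impI, elim conjE)
    assume a: "cmod \<psi> < 1" "n \<ge> 1" "has_law M (\<lambda>\<omega>. (ZU \<omega>, ZV \<omega>)) (BC_plus \<psi>)"
    have n: "0 < n" using a(2) by simp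
    have pn: "cmod (\<psi> ^ n) < 1" by (rule norm_lt1_pow[OF a(1,2)])
    have "has_law M (\<lambda>\<omega>. (fst (ZU \<omega>, ZV \<omega>) ^ n, snd (ZU \<omega>, ZV \<omega>) ^ n)) (BC_plus (\<psi> ^ n))"
    proof (rule pow_law[OF P a(3) BC_plus_torusP[OF a(1)] BC_plus_torusP[OF pn]])
      fix a b c d
      have "integral\<^sup>L (BC_plus \<psi>) (tmono (n*a) (n*b) (n*c) (n*d))
          = (if int (n*a) - int (n*b) = - (int (n*c) - int (n*d)) then Gk \<psi> (int (n*c) - int (n*d)) else 0)"
        by (rule mom_plus[OF a(1)])
      also have "\<dots> = (if int a - int b = - (int c - int d) then Gk (\<psi>^n) (int c - int d) else 0)"
        by (simp only: nat_diff_mult cond_plus[OF n] cond_minus[OF n] Gk_pow[OF n])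
      also have "\<dots> = integral\<^sup>L (BC_plus (\<psi>^n)) (tmono a b c d)"
        by (rule mom_plus[OF pn, symmetric])
      finally show "integral\<^sup>L (BC_plus \<psi>) (tmono (n*a) (n*b) (n*c) (n*d)) = integral\<^sup>L (BC_plus (\<psi>^n)) (tmono a b c d)" .
    qed
    then show "has_law M (\<lambda>\<omega>. (ZU \<omega> ^ n, ZV \<omega> ^ n)) (BC_plus (\<psi> ^ n))" by simp
  qed
  have E: "cmod \<psi> < 1 \<and> n \<ge> 1
       \<and> has_law M (\<lambda>\<omega>. (ZU \<omega>, ZV \<omega>)) (BC_minus \<psi>)
       \<longrightarrow> has_law M (\<lambda>\<omega>. (ZU \<omega> ^ n, ZV \<omega> ^ n)) (BC_minus (\<psi> ^ n))" for \<psi> ZU ZV and n :: nat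
  proof (intro impI, elim conjE)
    assume a: "cmod \<psi> < 1" "n \<ge> 1" "has_law M (\<lambda>\<omega>. (ZU \<omega>, ZV \<omega>)) (BC_minus \<psi>)"
    have n: "0 < n" using a(2) by simp
    have pn: "cmod (\<psi> ^ n) < 1" by (rule norm_lt1_pow[OF a(1,2)])
    have "has_law M (\<lambda>\<omega>. (fst (ZU \<omega>, ZV \<omega>) ^ n, snd (ZU \<omega>, ZV \<omega>) ^ n)) (BC_minus (\<psi> ^ n))"
    proof (rule pow_law[OF P a(3) BC_minus_torusP[OF a(1)] BC_minus_torusP[OF pn]])
      fix a b c d
      have "integral\<^sup>L (BC_minus \<psi>) (tmono (n*a) (n*b) (n*c) (n*d))
          = (if int (n*a) - int (n*b) = int (n*c) - int (n*d) then Gk \<psi> (int (n*c) - int (n*d)) else 0)"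
        by (rule mom_minus[OF a(1)])
      also have "\<dots> = (if int a - int b = int c - int d then Gk (\<psi>^n) (int c - int d) else 0)"
        by (simp only: nat_diff_mult cond_plus[OF n] cond_minus[OF n] Gk_pow[OF n])
      also have "\<dots> = integral\<^sup>L (BC_minus (\<psi>^n)) (tmono a b c d)"
        by (rule mom_minus[OF pn, symmetric])
      finally show "integral\<^sup>L (BC_minus \<psi>) (tmono (n*a) (n*b) (n*c) (n*d)) = integral\<^sup>L (BC_minus (\<psi>^n)) (tmono a b c d)" .
    qed
    then show "has_law M (\<lambda>\<omega>. (ZU \<omega> ^ n, ZV \<omega> ^ n)) (BC_minus (\<psi> ^ n))" by simp
  qed
  show ?thesis
    apply (intro conjI allI)
        apply (rule A)
       apply (rule B)
      apply (rule C)
     apply (rule D)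
    apply (rule E)
    done
qed



end
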